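(* Let $s\geq 3$, let $p,q$ be coprime integers with $q>0$, and let $k\in G_{K_s}(p,q)$ satisfy $M=k^q$, $L=k^{-p}$. Suppose $G_{K_s}(p,q)$ acts (on the right) on $\mathbb{R}$ by orientation-preserving homeomorphisms. If $xk>x$ for every $x\in\mathbb{R}$, then $xl>x$ for every $x\in\mathbb{R}$.
   Context: Let $R=c\,l\,c\,l^{-1}c^{-1}l^{-s}c^{-1}l^{-1}c\,l\,c\,l^{s-1}$, $M=c$ and $L=c^{-(2s-2)}\,l\,c\,l^{s}\,c\,l^{s}\,c\,l\,c^{-(2s+9)}$, and $G_{K_s}(p,q)=\langle c,l\mid R,\ M^pL^q\rangle$. For an action we write $xg$ for the image of $x$ under $g$, and $xg_1g_2=(xg_1)g_2$. *)

theory Defs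
  imports "HOL-Analysis.Analysis"
begin

datatype gen = Cg | Lg

text \<open>A letter is a generator with a sign (True = positive power, False = inverse).
  Words are lists of letters; a word a1 a2 ... an denotes the product a1 a2 ... an.\<close>
type_synonym word = "(gen \<times> bool) list"

definition winv :: "word \<Rightarrow> word" where
  "winv w = rev (map (\<lambda>(g, b). (g, \<not> b)) w)"

definition wpow :: "word \<Rightarrow> int \<Rightarrow> word" where
  "wpow w n = (if n \<ge> 0 then concat (replicate (nat n) w)
               else concat (replicate (nat (- n)) (winv w)))"

definition gC :: word where "gC = [(Cg, True)]"
definition gL :: word where "gL = [(Lg, True)]"

definition relR :: "nat \<Rightarrow> word" where
  "relR s = gC @ gL @ gC @ wpow gL (-1) @ wpow gC (-1) @ wpow gL (- int s)
            @ wpow gC (-1) @ wpow gL (-1) @ gC @ gL @ gC @ wpow gL (int s - 1)"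

definition wordM :: word where "wordM = gC"

definition wordL :: "nat \<Rightarrow> word" where
  "wordL s = wpow gC (- (2 * int s - 2)) @ gL @ gC @ wpow gL (int s) @ gC
             @ wpow gL (int s) @ gC @ gL @ wpow gC (- (2 * int s + 9))"

definition relators :: "nat \<Rightarrow> int \<Rightarrow> int \<Rightarrow> word set" where
  "relators s p q = {relR s, wpow wordM p @ wpow (wordL s) q}"

inductive eqG :: "nat \<Rightarrow> int \<Rightarrow> int \<Rightarrow> word \<Rightarrow> word \<Rightarrow> bool"
  for s :: nat and p q :: int where
  refl: "eqG s p q w w"
| sym: "eqG s p q u v \<Longrightarrow> eqG s p q v u"
| trans: "eqG s p q u v \<Longrightarrow> eqG s p q v w \<Longrightarrow> eqG s p q u w"
| cancel: "eqG s p q (u @ [(g, b), (g, \<not> b)] @ v) (u @ v)"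
| relator: "r \<in> relators s p q \<Longrightarrow> eqG s p q (u @ r @ v) (u @ v)"

definition homeo_plus :: "(real \<Rightarrow> real) \<Rightarrow> bool" where
  "homeo_plus f \<longleftrightarrow> (\<exists>g. homeomorphism UNIV UNIV f g) \<and> strict_mono f"

text \<open>Right action of a word, given the action of the generators:
  x(a1 a2 ... an) = (...((x a1) a2)...) an.\<close>
fun act_letter :: "(gen \<Rightarrow> real \<Rightarrow> real) \<Rightarrow> gen \<times> bool \<Rightarrow> real \<Rightarrow> real" where
  "act_letter \<rho> (g, b) = (if b then \<rho> g else inv (\<rho> g))"

fun act_word :: "(gen \<Rightarrow> real \<Rightarrow> real) \<Rightarrow> word \<Rightarrow> real \<Rightarrow> real" where
  "act_word \<rho> [] = id"
| "act_word \<rho> (a # w) = act_word \<rho> w \<circ> act_letter \<rho> a"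

definition is_action :: "nat \<Rightarrow> int \<Rightarrow> int \<Rightarrow> (gen \<Rightarrow> real \<Rightarrow> real) \<Rightarrow> bool" where
  "is_action s p q \<rho> \<longleftrightarrow> (\<forall>g. homeo_plus (\<rho> g)) \<and>
     (\<forall>u v. eqG s p q u v \<longrightarrow> act_word \<rho> u = act_word \<rho> v)"

end

theory Submission
  imports Defs
begin

lemma act_append: "act_word \<rho> (u @ v) = act_word \<rho> v \<circ> act_word \<rho> u"
  by (induction u) auto

lemma act_rep: "act_word \<rho> (concat (replicate n w)) = act_word \<rho> w ^^ n"
  by (induction n) (auto simp: act_append funpow_Suc_right funpow_swap1)

lemma act_wpow_pos: "n \<ge> 0 \<Longrightarrow> act_word \<rho> (wpow w n) = act_word \<rho> w ^^ nat n"
  by (simp add: wpow_def act_rep)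

lemma act_wpow_neg: "n < 0 \<Longrightarrow> act_word \<rho> (wpow w n) = act_word \<rho> (winv w) ^^ nat (- n)"
  by (simp add: wpow_def act_rep)

lemma funpow_pos:
  fixes K :: "real \<Rightarrow> real"
  assumes "\<forall>x. K x > x" "n \<ge> 1"
  shows "(K ^^ n) x > x"
  using assms(2)
proof (induction n)
  case 0 then show ?case by simp
next
  case (Suc n)
  show ?case
  proof (cases "n = 0")
    case True then show ?thesis using assms(1) by simp
  next
    case False
    then have "(K ^^ n) x > x" using Suc by simp
    moreover have "(K ^^ Suc n) x > (K ^^ n) x" using assms(1) by simp
    ultimately show ?thesis by linarith
  qed
qed

lemma homeo_facts:
  assumes "homeo_plus h"
  shows "\<And>x. inv h (h x) = x" "\<And>y. h (inv h y) = y" "strict_mono h"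
    "strict_mono (inv h)"
proof -
  from assms obtain h' where H: "homeomorphism UNIV UNIV h h'" and sm: "strict_mono h"
    unfolding homeo_plus_def by blast
  have inj: "inj h" using sm by (simp add: strict_mono_imp_inj_on)
  have surj: "surj h" using H unfolding homeomorphism_def by auto
  show a: "\<And>x. inv h (h x) = x" using inj by simp
  show b: "\<And>y. h (inv h y) = y" using surj by (simp add: surj_f_inv_f)
  show "strict_mono h" by fact
  show "strict_mono (inv h)"
  proof (rule strict_monoI)
    fix x y :: real assume "x < y"
    show "inv h x < inv h y"
    proof (rule ccontr)
      assume "\<not> inv h x < inv h y"
      then have "inv h y \<le> inv h x" by simp
      then have "h (inv h y) \<le> h (inv h x)" using sm by (simp add: strict_mono_less_eq)
      then show False using b \<open>x < y\<close> by simp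
    qed
  qed
qed

lemma sm_funpow: "strict_mono (h::real\<Rightarrow>real) \<Longrightarrow> strict_mono (h ^^ n)"
  by (induction n) (auto simp: strict_mono_def)

lemma funpow_inv:
  assumes "\<And>x. gi (g x) = x" "\<And>y. g (gi y) = y"
  shows "(gi ^^ n) ((g ^^ n) x) = x" "(g ^^ n) ((gi ^^ n) x) = x"
proof -
  show "(gi ^^ n) ((g ^^ n) x) = x"
  proof (induction n arbitrary: x)
    case (Suc n)
    have e1: "(g ^^ Suc n) x = g ((g ^^ n) x)" by simp
    have e2: "\<And>y. (gi ^^ Suc n) y = (gi ^^ n) (gi y)" by (simp add: funpow_swap1)
    have "(gi ^^ Suc n) ((g ^^ Suc n) x) = (gi ^^ n) (gi (g ((g ^^ n) x)))"
      by (simp only: e1 e2)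
    then show ?case using Suc assms by simp
  qed simp
  show "(g ^^ n) ((gi ^^ n) x) = x"
  proof (induction n arbitrary: x)
    case (Suc n)
    have e1: "(gi ^^ Suc n) x = gi ((gi ^^ n) x)" by simp
    have e2: "\<And>y. (g ^^ Suc n) y = (g ^^ n) (g y)" by (simp add: funpow_swap1)
    have "(g ^^ Suc n) ((gi ^^ Suc n) x) = (g ^^ n) (g (gi ((gi ^^ n) x)))"
      by (simp only: e1 e2)
    then show ?case using Suc assms by simp
  qed simp
qed

theorem lemma3p4:
  fixes s :: nat and p q :: int and k :: word and \<rho> :: "gen \<Rightarrow> real \<Rightarrow> real"
  assumes "s \<ge> 3"
    and "coprime p q" and "q > 0"
    and "eqG s p q wordM (wpow k q)"
    and "eqG s p q (wordL s) (wpow k (- p))"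
    and "is_action s p q \<rho>"
    and "\<forall>x. act_word \<rho> k x > x"
  shows "\<forall>x. act_word \<rho> gL x > x"
proof -
  define f where "f = \<rho> Cg"
  define g where "g = \<rho> Lg"
  define fi where "fi = inv f"
  define gi where "gi = inv g"
  have act: "\<And>u v. eqG s p q u v \<Longrightarrow> act_word \<rho> u = act_word \<rho> v"
    using assms(6) unfolding is_action_def by blast
  have hf: "homeo_plus f" and hg: "homeo_plus g"
    using assms(6) unfolding is_action_def f_def g_def by auto
  note F = homeo_facts[OF hf, folded fi_def]
  note G = homeo_facts[OF hg, folded gi_def]
  have fpos: "\<And>x. f x > x"
  proof -
    fix x
    have "act_word \<rho> wordM = act_word \<rho> (wpow k q)" using act assms(4) by blast
    then have "f x = (act_word \<rho> k ^^ nat q) x"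
      using assms(3) by (simp add: wordM_def gC_def f_def act_wpow_pos)
    also have "\<dots> > x" using funpow_pos[OF assms(7)] assms(3) by simp
    finally show "f x > x" .
  qed
  have "eqG s p q ([] @ relR s @ []) ([] @ [])"
    by (rule eqG.relator) (simp add: relators_def)
  then have "act_word \<rho> (relR s) = id" using act by fastforce
  then have Rz: "\<And>z. (g^^(s-1)) (f (g (f (gi (fi ((gi^^s) (fi (gi (f (g (f z))))))))))) = z"
    using assms(1)
    by (simp add: relR_def act_append act_wpow_pos act_wpow_neg gC_def gL_def winv_def
        f_def g_def fi_def gi_def nat_diff_distrib fun_eq_iff)
  show ?thesis
  proof (rule ccontr)
    assume "\<not> ?thesis"
    then obtain y where y: "g y \<le> y" unfolding g_def by (auto simp: not_less gL_def)
    define a where "a = fi (gi (fi ((gi^^(s-1)) y)))"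
    define T where "T = (\<lambda>x. (g^^(s-1)) (f (g (f x))))"
    have Ta: "T a = y" unfolding T_def a_def
      by (simp add: F G funpow_inv[of gi g, OF G(1) G(2)])
    define Qa where "Qa = g (f ((g^^s) (f (g a))))"
    define z where "z = fi (gi (fi Qa))"
    have "f (g (f z)) = Qa" unfolding z_def by (simp add: F G)
    have Rz': "(g^^(s-1)) (f (g (f (gi (fi ((gi^^s) (fi (gi (f (g (f z))))))))))) = T a"
      unfolding z_def Qa_def T_def
      by (simp add: F G funpow_inv[of gi g, OF G(1) G(2)])
    have zeq: "z = T a" using Rz[of z] Rz' by simp
    have s1: "Qa < g (f ((g^^s) (f (g (f a)))))"
    proof -
      have m: "strict_mono (g^^s)" using G(3) by (rule sm_funpow)
      have "g a < g (f a)" using fpos[of a] G(3) by (simp add: strict_monoD)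
      then have "f (g a) < f (g (f a))" using F(3) by (simp add: strict_monoD)
      then have "(g^^s) (f (g a)) < (g^^s) (f (g (f a)))" using m by (simp add: strict_monoD)
      then have "f ((g^^s) (f (g a))) < f ((g^^s) (f (g (f a))))" using F(3) by (simp add: strict_monoD)
      then show ?thesis unfolding Qa_def using G(3) by (simp add: strict_monoD)
    qed
    have gs: "(g^^s) (f (g (f a))) = g (T a)"
    proof -
      obtain m where "s = Suc m" using assms(1) by (cases s) auto
      then show ?thesis unfolding T_def by simp
    qed
    have s2: "g (f (g (T a))) \<le> g (f (T a))"
    proof -
      have "f (g (T a)) \<le> f (T a)" using Ta y F(3) by (simp add: strict_mono_less_eq)
      then show ?thesis using G(3) by (simp add: strict_mono_less_eq)
    qed
    have s3: "g (f (T a)) < f (g (f (T a)))" by (rule fpos)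
    have "f (g (f z)) < f (g (f (T a)))"
      using s1 s2 s3 gs \<open>f (g (f z)) = Qa\<close> by simp
    then show False using zeq by simp
  qed
qed

end
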